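(* Let $C$ be a cake, $S$ a family of usable pieces, and $C_0\subseteq C_1\subseteq C$ pieces. Let $K$ be an $S$-good knife function on $C$ from $C_0$ to $C_1$. Let two agents $A,B$ have value measures $V_A,V_B$ on $C$ normalized so that $V_A(C)=V_B(C)=1$, and suppose that for each $i\in\{A,B\}$: $V_i^S(C_0)\le V_i^S(C\setminus C_0)$ and $V_i^S(C_1)\ge V_i^S(C\setminus C_1)$. Then for each $i$ there is $t_i\in[0,1]$ with $V_i^S(K(t_i))=V_i^S(C\setminus K(t_i))$; after renaming the agents so that $t_A\le t_B$, for every $t^*\in[t_A,t_B]$, giving $K(t^* )$ to $A$ and $C\setminus K(t^* )$ to $B$ yields a division in which each agent's $S$-value of his own piece is at least his $S$-value of the other piece, and each agent $i$'s $S$-value of his own piece is at least $$\max\Big(V_i^S(C_0),\ V_i^S(C\setminus C_1),\ \frac{1}{\mathrm{Loss}(K,S)}\Big).$$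
   Context: A cake is a Borel subset $C\subseteq\mathbb{R}^d$; a piece is a Borel subset of $\mathbb{R}^d$. A value measure on $C$ is $V(X)=\int_X v$ with $v$ non-negative, bounded, integrable on $C$, $V(C)<\infty$. $S$ is a family of pieces; $V^S(X):=\sup\{V(s):s\in S, s\subseteq X\}$. $\mathrm{Loss}(X,S):=\sup_V V(X)/V^S(X)$ over finite Lebesgue-absolutely-continuous measures $V$ with $V^S(X)>0$ ($\infty$ if unbounded). A knife function on $C$ is a map $K$ from $[0,1]$ to Borel subsets of $C$ with $K(t)\subseteq K(t')$ whenever $t\le t'$; it is a knife function from $C_0$ to $C_1$ if $K(0)=C_0$ and $K(1)=C_1$. Its complement is $\overline{K}(t):=C\setminus K(t)$. $K$ is $S$-good if for every finite measure $V$ absolutely continuous w.r.t. Lebesgue measure, both $t\mapsto V^S(K(t))$ and $t\mapsto V^S(\overline K(t))$ are continuous. The geometric loss of $K$ is $\mathrm{Loss}(K,S):=\sup_{t\in[0,1]}\big(\mathrm{Loss}(K(t),S)+\mathrm{Loss}(\overline K(t),S)\big)$. *)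

theory Defs
  imports "HOL-Analysis.Analysis"
begin

text \<open>Cakes and pieces live in a Euclidean space 'a (standing for R^d).
  A value measure on a cake C is given by a density v on C.\<close>

definition value_density :: "'a::euclidean_space set \<Rightarrow> ('a \<Rightarrow> real) \<Rightarrow> bool" where
  "value_density C v \<longleftrightarrow> v \<in> borel_measurable borel \<and> (\<forall>x\<in>C. 0 \<le> v x)
     \<and> bounded (v ` C) \<and> set_integrable lborel C v"

definition value_measure :: "'a::euclidean_space set \<Rightarrow> ('a \<Rightarrow> real) \<Rightarrow> 'a measure" where
  "value_measure C v = density lborel (\<lambda>x. ennreal (indicator C x * v x))"

definition fin_ac_measure :: "'a::euclidean_space measure \<Rightarrow> bool" where
  "fin_ac_measure V \<longleftrightarrow> sets V = sets borel \<and> finite_measure V \<and> absolutely_continuous lborel V"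

definition VS :: "'a measure \<Rightarrow> 'a set set \<Rightarrow> 'a set \<Rightarrow> real" where
  "VS V S X = Sup (insert 0 (measure V ` {s \<in> S. s \<subseteq> X}))"

definition Loss :: "'a::euclidean_space set \<Rightarrow> 'a set set \<Rightarrow> ereal" where
  "Loss X S = (SUP V \<in> {V. fin_ac_measure V \<and> VS V S X > 0}. ereal (measure V X / VS V S X))"

definition knife_function :: "'a::euclidean_space set \<Rightarrow> (real \<Rightarrow> 'a set) \<Rightarrow> bool" where
  "knife_function C K \<longleftrightarrow> (\<forall>t\<in>{0..1}. K t \<in> sets borel \<and> K t \<subseteq> C)
     \<and> (\<forall>t\<in>{0..1}. \<forall>t'\<in>{0..1}. t \<le> t' \<longrightarrow> K t \<subseteq> K t')"

definition knife_from_to :: "'a::euclidean_space set \<Rightarrow> (real \<Rightarrow> 'a set) \<Rightarrow> 'a set \<Rightarrow> 'a set \<Rightarrow> bool" where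
  "knife_from_to C K C0 C1 \<longleftrightarrow> knife_function C K \<and> K 0 = C0 \<and> K 1 = C1"

definition S_good :: "'a::euclidean_space set \<Rightarrow> 'a set set \<Rightarrow> (real \<Rightarrow> 'a set) \<Rightarrow> bool" where
  "S_good C S K \<longleftrightarrow> (\<forall>V. fin_ac_measure V \<longrightarrow>
      continuous_on {0..1} (\<lambda>t. VS V S (K t)) \<and> continuous_on {0..1} (\<lambda>t. VS V S (C - K t)))"

definition knife_Loss :: "'a::euclidean_space set \<Rightarrow> (real \<Rightarrow> 'a set) \<Rightarrow> 'a set set \<Rightarrow> ereal" where
  "knife_Loss C K S = (SUP t\<in>{0..1}. Loss (K t) S + Loss (C - K t) S)"

end

theory Submission
  imports Defs
begin
lemma vm_sets[simp]: "sets (value_measure C v) = sets borel"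
  by (simp add: value_measure_def)

lemma vd_f_nonneg: "value_density C v \<Longrightarrow> 0 \<le> indicator C x * v x"
  by (auto simp: value_density_def indicator_def)

lemma vd_f_meas: "value_density C v \<Longrightarrow> C \<in> sets borel \<Longrightarrow> (\<lambda>x. indicator C x * v x) \<in> borel_measurable borel"
  by (auto simp: value_density_def)

lemma vm_fin_ac:
  assumes "value_density C v"
  shows "fin_ac_measure (value_measure C v)"
proof -
  have int: "integrable lborel (\<lambda>x. indicator C x *\<^sub>R v x)"
    using assms by (simp add: value_density_def set_integrable_def)
  have nn: "\<And>x. norm (indicator C x *\<^sub>R v x) = indicator C x * v x"
    using assms by (auto simp: value_density_def indicator_def)
  have "(\<integral>\<^sup>+x. ennreal (indicator C x * v x) \<partial>lborel) < \<infinity>"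
    using integrableD(2)[OF int] by (simp add: nn less_top)
  moreover have meas: "(\<lambda>x. indicator C x * v x) \<in> borel_measurable lborel"
    using borel_measurable_integrable[OF int] by simp
  ultimately have "emeasure (value_measure C v) (space (value_measure C v)) < \<infinity>"
    by (simp add: value_measure_def emeasure_density)
  then have "finite_measure (value_measure C v)"
    by (intro finite_measureI) simp
  moreover have "absolutely_continuous lborel (value_measure C v)"
    unfolding value_measure_def by (rule absolutely_continuousI_density) 
         (use meas in \<open>auto simp: measurable_lborel1\<close>)
  ultimately show ?thesis by (simp add: fin_ac_measure_def)
qed

lemma finac_finite: "fin_ac_measure V \<Longrightarrow> finite_measure V"
  by (simp add: fin_ac_measure_def)

lemma finac_sets: "fin_ac_measure V \<Longrightarrow> sets V = sets borel"
  by (simp add: fin_ac_measure_def)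

lemma meas_le_space: "finite_measure V \<Longrightarrow> measure V A \<le> measure V (space V)"
proof (cases "A \<in> sets V")
  case True
  assume "finite_measure V"
  then show ?thesis using True by (intro finite_measure.finite_measure_mono) (auto dest: sets.sets_into_space)
next
  case False
  then show ?thesis by (simp add: measure_notin_sets)
qed

lemma VS_bdd': "finite_measure V \<Longrightarrow> bdd_above (measure V ` A)"
  by (rule bdd_aboveI[where M="measure V (space V)"]) (auto intro: meas_le_space)

lemma VS_bdd: "finite_measure V \<Longrightarrow> bdd_above (insert 0 (measure V ` A))"
  using VS_bdd' by auto

lemma VS_nonneg: "finite_measure V \<Longrightarrow> 0 \<le> VS V S X"
  unfolding VS_def by (rule cSup_upper) (auto intro: VS_bdd VS_bdd')

lemma VS_ge: "finite_measure V \<Longrightarrow> s \<in> S \<Longrightarrow> s \<subseteq> X \<Longrightarrow> measure V s \<le> VS V S X"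
  unfolding VS_def by (rule cSup_upper) (auto intro: VS_bdd VS_bdd')

lemma VS_mono: "finite_measure V \<Longrightarrow> X \<subseteq> Y \<Longrightarrow> VS V S X \<le> VS V S Y"
  unfolding VS_def by (rule cSup_subset_mono) (auto intro: VS_bdd VS_bdd')

lemma VS_le_bound: "0 \<le> c \<Longrightarrow> (\<And>s. s \<in> S \<Longrightarrow> s \<subseteq> X \<Longrightarrow> measure V s \<le> c) \<Longrightarrow> VS V S X \<le> c"
  unfolding VS_def by (rule cSup_least) auto

lemma VS_le_meas: "finite_measure V \<Longrightarrow> S \<subseteq> sets V \<Longrightarrow> X \<in> sets V \<Longrightarrow> VS V S X \<le> measure V X"
  by (rule VS_le_bound) (auto intro: finite_measure.finite_measure_mono)

lemma VS_pos: "0 < VS V S X \<Longrightarrow> \<exists>s\<in>S. s \<subseteq> X \<and> 0 < measure V s"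
proof (rule ccontr)
  assume "0 < VS V S X" "\<not> (\<exists>s\<in>S. s \<subseteq> X \<and> 0 < measure V s)"
  then have "VS V S X \<le> 0" by (intro VS_le_bound) (auto simp: not_less)
  with \<open>0 < VS V S X\<close> show False by simp
qed

definition NP :: "'a::euclidean_space set set \<Rightarrow> 'a set \<Rightarrow> bool" where
  "NP S X \<longleftrightarrow> (\<exists>V. fin_ac_measure V \<and> 0 < VS V S X)"

lemma NP_mono: "NP S X \<Longrightarrow> X \<subseteq> Y \<Longrightarrow> NP S Y"
  unfolding NP_def by (meson finac_finite VS_mono less_le_trans)

lemma notNP_VS: "\<not> NP S X \<Longrightarrow> fin_ac_measure V \<Longrightarrow> VS V S X = 0"
  unfolding NP_def by (meson finac_finite VS_nonneg not_less order.antisym)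

lemma Loss_notNP: "\<not> NP S X \<Longrightarrow> Loss X S = -\<infinity>"
proof -
  assume "\<not> NP S X"
  then have e: "{V. fin_ac_measure V \<and> VS V S X > 0} = {}" by (auto simp: NP_def)
  show ?thesis unfolding Loss_def e by (simp add: bot_ereal_def)
qed

lemma Loss_ge: "fin_ac_measure V \<Longrightarrow> 0 < VS V S X \<Longrightarrow> ereal (measure V X / VS V S X) \<le> Loss X S"
  unfolding Loss_def by (rule SUP_upper) auto

lemma Loss_ge1: 
  assumes "NP S X" "X \<in> sets borel" "S \<subseteq> sets borel"
  shows "1 \<le> Loss X S"
proof -
  obtain V where V: "fin_ac_measure V" "0 < VS V S X" using assms(1) by (auto simp: NP_def)
  have "VS V S X \<le> measure V X"
    using V assms by (intro VS_le_meas) (auto simp: finac_finite finac_sets)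
  then have "1 \<le> measure V X / VS V S X" using V by simp
  then have "ereal 1 \<le> ereal (measure V X / VS V S X)" by simp
  also have "\<dots> \<le> Loss X S" by (rule Loss_ge[OF V])
  finally show ?thesis by (simp add: one_ereal_def)
qed

lemma dens_add:
  fixes f :: "'a::euclidean_space \<Rightarrow> real"
  assumes f: "f \<in> borel_measurable borel" "\<And>x. 0 \<le> f x" and B: "B \<in> sets borel" and Y: "Y \<in> sets borel"
    and e: "0 \<le> e"
  shows "emeasure (density lborel (\<lambda>x. ennreal (f x + e * indicator B x))) Y
       = emeasure (density lborel (\<lambda>x. ennreal (f x))) Y + ennreal e * emeasure lborel (B \<inter> Y)"
proof -
  have m1: "(\<lambda>x. ennreal (f x + e * indicator B x)) \<in> borel_measurable lborel"
    using f B by auto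
  have m2: "(\<lambda>x. ennreal (f x)) \<in> borel_measurable lborel" using f by auto
  have "emeasure (density lborel (\<lambda>x. ennreal (f x + e * indicator B x))) Y
      = (\<integral>\<^sup>+x. ennreal (f x + e * indicator B x) * indicator Y x \<partial>lborel)"
    using m1 Y by (simp add: emeasure_density)
  also have "\<dots> = (\<integral>\<^sup>+x. ennreal (f x) * indicator Y x + ennreal e * indicator (B \<inter> Y) x \<partial>lborel)"
    using f e by (intro nn_integral_cong) (auto simp: indicator_def ennreal_plus)
  also have "\<dots> = (\<integral>\<^sup>+x. ennreal (f x) * indicator Y x \<partial>lborel) + (\<integral>\<^sup>+x. ennreal e * indicator (B \<inter> Y) x \<partial>lborel)"
    using f B Y by (intro nn_integral_add) auto
  also have "\<dots> = emeasure (density lborel (\<lambda>x. ennreal (f x))) Y + ennreal e * emeasure lborel (B \<inter> Y)"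
    using m2 B Y by (simp add: emeasure_density nn_integral_cmult_indicator)
  finally show ?thesis .
qed

lemma vm_measure_add:
  assumes d: "value_density C v" and B: "B \<in> sets borel" and Bf: "emeasure lborel B < \<infinity>"
    and Y: "Y \<in> sets borel" and e: "0 \<le> e"
  shows "measure (density lborel (\<lambda>x. ennreal (indicator C x * v x + e * indicator B x))) Y
       = measure (value_measure C v) Y + e * measure lborel (B \<inter> Y)"
proof -
  have int: "integrable lborel (\<lambda>x. indicator C x *\<^sub>R v x)"
    using d by (simp add: value_density_def set_integrable_def)
  have meas: "(\<lambda>x. indicator C x * v x) \<in> borel_measurable borel"
    using borel_measurable_integrable[OF int] by (simp add: measurable_lborel1)
  have fin: "finite_measure (value_measure C v)" using vm_fin_ac[OF d] by (simp add: finac_finite)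
  have BY: "emeasure lborel (B \<inter> Y) < \<infinity>"
    by (rule order.strict_trans1[OF emeasure_mono[of "B \<inter> Y" B] Bf]) (use B in auto)
  have "emeasure (density lborel (\<lambda>x. ennreal (indicator C x * v x + e * indicator B x))) Y
     = emeasure (value_measure C v) Y + ennreal e * emeasure lborel (B \<inter> Y)"
    unfolding value_measure_def
    by (rule dens_add[OF meas _ B Y e]) (rule vd_f_nonneg[OF d])
  also have "\<dots> = ennreal (measure (value_measure C v) Y) + ennreal e * ennreal (measure lborel (B \<inter> Y))"
    using fin BY by (simp add: finite_measure.emeasure_eq_measure emeasure_eq_ennreal_measure)
  also have "\<dots> = ennreal (measure (value_measure C v) Y + e * measure lborel (B \<inter> Y))"
    using e by (simp add: ennreal_mult ennreal_plus)
  finally have eq: "emeasure (density lborel (\<lambda>x. ennreal (indicator C x * v x + e * indicator B x))) Y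
     = ennreal (measure (value_measure C v) Y + e * measure lborel (B \<inter> Y))" .
  have nn: "0 \<le> measure (value_measure C v) Y + e * measure lborel (B \<inter> Y)"
    using e by (simp add: measure_nonneg)
  show ?thesis using eq nn by (metis enn2real_ennreal measure_def)
qed

lemma vm_dens_add_finac:
  assumes d: "value_density C v" and B: "B \<in> sets borel" and Bf: "emeasure lborel B < \<infinity>"
    and e: "0 \<le> e"
  shows "fin_ac_measure (density lborel (\<lambda>x. ennreal (indicator C x * v x + e * indicator B x)))"
proof -
  let ?U = "density lborel (\<lambda>x. ennreal (indicator C x * v x + e * indicator B x))"
  have int: "integrable lborel (\<lambda>x. indicator C x *\<^sub>R v x)"
    using d by (simp add: value_density_def set_integrable_def)
  have meas: "(\<lambda>x. indicator C x * v x) \<in> borel_measurable borel"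
    using borel_measurable_integrable[OF int] by (simp add: measurable_lborel1)
  have fin: "finite_measure (value_measure C v)" using vm_fin_ac[OF d] by (simp add: finac_finite)
  have "emeasure ?U UNIV = emeasure (value_measure C v) UNIV + ennreal e * emeasure lborel (B \<inter> UNIV)"
    unfolding value_measure_def
    by (rule dens_add[OF meas _ B _ e]) (auto intro: vd_f_nonneg[OF d])
  also have "\<dots> < \<infinity>"
    using fin Bf by (simp add: finite_measure.emeasure_eq_measure ennreal_mult_less_top less_top)
  finally have "finite_measure ?U" by (intro finite_measureI) (simp add: less_top)
  moreover have "absolutely_continuous lborel ?U"
    by (rule absolutely_continuousI_density) (use meas B in \<open>auto simp: measurable_lborel1\<close>)
  ultimately show ?thesis by (simp add: fin_ac_measure_def)
qed

lemma L2:
  assumes S: "S \<subseteq> sets borel" and X: "X \<in> sets borel" and d: "value_density C v"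
    and N: "NP S X" and z: "VS (value_measure C v) S X = 0"
    and p: "0 < measure (value_measure C v) X"
  shows "Loss X S = \<infinity>"
proof -
  let ?V = "value_measure C v"
  have finV: "finite_measure ?V" using vm_fin_ac[OF d] by (simp add: finac_finite)
  obtain W where W: "fin_ac_measure W" "0 < VS W S X" using N by (auto simp: NP_def)
  obtain s0 where s0: "s0 \<in> S" "s0 \<subseteq> X" "0 < measure W s0" using VS_pos[OF W(2)] by blast
  have s0b: "s0 \<in> sets borel" using s0 S by auto
  have "emeasure lborel s0 \<noteq> 0"
  proof
    assume "emeasure lborel s0 = 0"
    then have "emeasure W s0 = 0"
      using W(1) s0b by (intro absolutely_continuousD[of lborel W]) (auto simp: fin_ac_measure_def)
    then have "measure W s0 = 0" by (simp add: measure_def)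
    with s0 show False by simp
  qed
  have "\<exists>n::nat. emeasure lborel (s0 \<inter> cball 0 (real n)) \<noteq> 0"
  proof (rule ccontr)
    assume "\<not> ?thesis"
    then have "\<And>n::nat. s0 \<inter> cball 0 (real n) \<in> null_sets lborel"
      using s0b by (auto simp: null_sets_def)
    then have "(\<Union>n::nat. s0 \<inter> cball 0 (real n)) \<in> null_sets lborel" by blast
    moreover have "(\<Union>n::nat. s0 \<inter> cball 0 (real n)) = s0"
    proof (rule set_eqI, rule iffI)
      fix x assume "x \<in> s0"
      obtain n::nat where "norm x \<le> real n" using real_arch_simple by blast
      then show "x \<in> (\<Union>n::nat. s0 \<inter> cball 0 (real n))" using \<open>x \<in> s0\<close> by auto
    qed auto
    ultimately have "emeasure lborel s0 = 0" by (simp add: null_sets_def)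
    with \<open>emeasure lborel s0 \<noteq> 0\<close> show False by simp
  qed
  then obtain n::nat where n: "emeasure lborel (s0 \<inter> cball 0 (real n)) \<noteq> 0" by blast
  define B where "B = s0 \<inter> cball 0 (real n)"
  have Bb: "B \<in> sets borel" using s0b by (simp add: B_def)
  have Bf: "emeasure lborel B < \<infinity>"
    unfolding B_def by (rule order.strict_trans1[OF emeasure_mono emeasure_lborel_cball_finite]) auto
  define m where "m = measure lborel B"
  have Bm: "emeasure lborel B = ennreal m" unfolding m_def using Bf by (simp add: emeasure_eq_ennreal_measure)
  have mpos: "0 < m" using n Bm by (simp add: B_def m_def) (simp add: measure_nonneg order_le_neq_trans)
  have BX: "B \<subseteq> X" "B \<subseteq> s0" using s0 by (auto simp: B_def)
  show ?thesis
  proof (rule ereal_top)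
    fix r :: real
    show "ereal r \<le> Loss X S"
    proof (cases "r \<le> 0")
      case True
      have "ereal r \<le> 1" using True by (simp add: one_ereal_def)
      also have "1 \<le> Loss X S" by (rule Loss_ge1[OF N X S])
      finally show ?thesis .
    next
      case False
      define e where "e = measure ?V X / (r * m)"
      have epos: "0 < e" using False mpos p by (simp add: e_def)
      let ?U = "density lborel (\<lambda>x. ennreal (indicator C x * v x + e * indicator B x))"
      have Umeas: "\<And>Y. Y \<in> sets borel \<Longrightarrow> measure ?U Y = measure ?V Y + e * measure lborel (B \<inter> Y)"
        using vm_measure_add[OF d Bb Bf] epos by simp
      have Ufin: "fin_ac_measure ?U" using vm_dens_add_finac[OF d Bb Bf] epos by simp
      have VVs: "measure ?V s \<le> 0" if "s \<in> S" "s \<subseteq> X" for s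
        using VS_ge[OF finV that] z by simp
      have upper: "VS ?U S X \<le> e * m"
      proof (rule VS_le_bound)
        show "0 \<le> e * m" using epos mpos by simp
        fix s assume s: "s \<in> S" "s \<subseteq> X"
        have "measure lborel (B \<inter> s) \<le> m"
          unfolding m_def using Bf Bb s S
          by (intro measure_mono_fmeasurable) (auto simp: fmeasurable_def)
        then have "e * measure lborel (B \<inter> s) \<le> e * m" using epos by simp
        then show "measure ?U s \<le> e * m" using Umeas[of s] s S VVs[OF s] by auto
      qed
      have "B \<inter> s0 = B" using BX by auto
      then have "measure ?U s0 = measure ?V s0 + e * m" using Umeas[OF s0b] by (simp add: m_def)
      also have "\<dots> \<ge> e * m" by (simp add: measure_nonneg)
      finally have "e * m \<le> VS ?U S X"
        using VS_ge[OF finac_finite[OF Ufin] s0(1) s0(2)] by linarith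
      then have Upos: "0 < VS ?U S X" using epos mpos by (smt (verit) mult_pos_pos)
      have "B \<inter> X = B" using BX by auto
      then have UX: "measure ?U X = measure ?V X + e * m" using Umeas[OF X] by (simp add: m_def)
      have "r = measure ?V X / (e * m)" using epos mpos False p by (simp add: e_def field_simps)
      also have "\<dots> \<le> measure ?U X / VS ?U S X"
      proof (rule frac_le)
        show "0 \<le> measure ?U X" by (simp add: measure_nonneg)
        show "measure ?V X \<le> measure ?U X" using UX epos mpos by simp
        show "0 < VS ?U S X" by (rule Upos)
        show "VS ?U S X \<le> e * m" by (rule upper)
      qed
      finally have "ereal r \<le> ereal (measure ?U X / VS ?U S X)" by simp
      also have "\<dots> \<le> Loss X S" by (rule Loss_ge[OF Ufin Upos])
      finally show ?thesis .
    qed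
  qed
qed

lemma LB:
  assumes S: "S \<subseteq> sets borel" and X: "X \<in> sets borel" and d: "value_density C v"
    and N: "NP S X" and l: "Loss X S = ereal l"
  shows "measure (value_measure C v) X \<le> l * VS (value_measure C v) S X"
proof -
  let ?V = "value_measure C v"
  have fa: "fin_ac_measure ?V" by (rule vm_fin_ac[OF d])
  show ?thesis
  proof (cases "0 < VS ?V S X")
    case True
    have "ereal (measure ?V X / VS ?V S X) \<le> ereal l" using Loss_ge[OF fa True] l by simp
    then have "measure ?V X / VS ?V S X \<le> l" by simp
    then show ?thesis using True by (simp add: divide_le_eq mult.commute)
  next
    case False
    then have z: "VS ?V S X = 0" using VS_nonneg[OF finac_finite[OF fa], of S X] by simp
    have "\<not> 0 < measure ?V X"
    proof
      assume "0 < measure ?V X"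
      from L2[OF S X d N z this] l show False by simp
    qed
    then show ?thesis using z by simp
  qed
qed

lemma ivt_gap:
  fixes g :: "real \<Rightarrow> real"
  assumes c: "continuous_on {u..w} g" and uw: "u \<le> w" and l: "0 < l"
    and gap: "\<And>s. s \<in> {u..w} \<Longrightarrow> g s = 0 \<or> 1 \<le> l * g s"
    and ends: "(g u = 0 \<and> 1 \<le> l * g w) \<or> (1 \<le> l * g u \<and> g w = 0)"
  shows False
proof -
  have "\<exists>x. u \<le> x \<and> x \<le> w \<and> g x = 1 / (2 * l)"
  proof (cases "g u = 0 \<and> 1 \<le> l * g w")
    case True
    have "1 / (2*l) \<le> g w" using True l by (simp add: field_simps)
    then show ?thesis using True l by (intro IVT'[OF _ _ uw c]) auto
  next
    case False
    then have F: "1 \<le> l * g u" "g w = 0" using ends by auto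
    have "1 / (2*l) \<le> g u" using F l by (simp add: field_simps)
    then show ?thesis using F l by (intro IVT2'[OF _ _ uw c]) auto
  qed
  then obtain x where x: "u \<le> x" "x \<le> w" "g x = 1 / (2 * l)" by blast
  from gap[of x] x l show False by (simp add: field_simps)
qed

lemma ereal_fin1: "(x::ereal) \<noteq> \<infinity> \<Longrightarrow> 1 \<le> x \<Longrightarrow> \<exists>r. x = ereal r \<and> 1 \<le> r"
  by (cases x) auto

lemma inv_bound:
  assumes p: "0 \<le> p" and k: "\<And>l. L = ereal l \<Longrightarrow> 1 \<le> l * p"
  shows "inverse L \<le> ereal p"
proof (cases L)
  case (real l)
  then have h: "1 \<le> l * p" by (rule k)
  then have lp: "0 < l * p" by simp
  then have "0 < l" "0 < p" using p by (auto simp: zero_less_mult_iff)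
  then have "inverse l \<le> p" using h by (simp add: field_simps)
  then show ?thesis using real \<open>0 < l\<close> by simp
qed (use p in auto)

theorem mainTheorem3:
  fixes C C0 C1 :: "'a::euclidean_space set" and S :: "'a set set"
    and K :: "real \<Rightarrow> 'a set" and vA vB :: "'a \<Rightarrow> real"
  defines "VA \<equiv> value_measure C vA" and "VB \<equiv> value_measure C vB"
  assumes cake: "C \<in> sets borel"
    and pieces: "S \<subseteq> sets borel"
    and C0: "C0 \<in> sets borel" and C1: "C1 \<in> sets borel"
    and sub: "C0 \<subseteq> C1" "C1 \<subseteq> C"
    and knife: "knife_from_to C K C0 C1"
    and good: "S_good C S K"
    and dA: "value_density C vA" and dB: "value_density C vB"
    and normA: "measure VA C = 1" and normB: "measure VB C = 1"
    and hA0: "VS VA S C0 \<le> VS VA S (C - C0)" and hA1: "VS VA S C1 \<ge> VS VA S (C - C1)"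
    and hB0: "VS VB S C0 \<le> VS VB S (C - C0)" and hB1: "VS VB S C1 \<ge> VS VB S (C - C1)"
  shows "(\<exists>t\<in>{0..1}. VS VA S (K t) = VS VA S (C - K t))
       \<and> (\<exists>t\<in>{0..1}. VS VB S (K t) = VS VB S (C - K t))
       \<and> (\<forall>tA\<in>{0..1}. \<forall>tB\<in>{0..1}.
            VS VA S (K tA) = VS VA S (C - K tA) \<longrightarrow> VS VB S (K tB) = VS VB S (C - K tB)
            \<longrightarrow> tA \<le> tB \<longrightarrow>
            (\<forall>t\<in>{tA..tB}.
               VS VA S (K t) \<ge> VS VA S (C - K t)
             \<and> VS VB S (C - K t) \<ge> VS VB S (K t)
             \<and> ereal (VS VA S (K t)) \<ge>
                 max (ereal (VS VA S C0)) (max (ereal (VS VA S (C - C1))) (inverse (knife_Loss C K S)))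
             \<and> ereal (VS VB S (C - K t)) \<ge>
                 max (ereal (VS VB S C0)) (max (ereal (VS VB S (C - C1))) (inverse (knife_Loss C K S)))))"
proof -
  have faA: "fin_ac_measure VA" unfolding VA_def by (rule vm_fin_ac[OF dA])
  have faB: "fin_ac_measure VB" unfolding VB_def by (rule vm_fin_ac[OF dB])
  have fA: "finite_measure VA" and fB: "finite_measure VB" using faA faB by (auto simp: finac_finite)
  have sA: "sets VA = sets borel" and sB: "sets VB = sets borel" using faA faB by (auto simp: finac_sets)
  have K0: "K 0 = C0" and K1: "K 1 = C1" and kf: "knife_function C K"
    using knife by (auto simp: knife_from_to_def)
  have Kb: "\<And>t. t \<in> {0..1} \<Longrightarrow> K t \<in> sets borel" and KC: "\<And>t. t \<in> {0..1} \<Longrightarrow> K t \<subseteq> C"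
    using kf by (auto simp: knife_function_def)
  have Km: "\<And>t t'. t \<in> {0..1} \<Longrightarrow> t' \<in> {0..1} \<Longrightarrow> t \<le> t' \<Longrightarrow> K t \<subseteq> K t'"
    using kf by (auto simp: knife_function_def)
  have Kcb: "\<And>t. t \<in> {0..1} \<Longrightarrow> C - K t \<in> sets borel" using Kb cake by auto
  have Kcm: "\<And>t t'. t \<in> {0..1} \<Longrightarrow> t' \<in> {0..1} \<Longrightarrow> t \<le> t' \<Longrightarrow> C - K t' \<subseteq> C - K t"
    using Km by blast
  have cA1: "continuous_on {0..1} (\<lambda>t. VS VA S (K t))" and cA2: "continuous_on {0..1} (\<lambda>t. VS VA S (C - K t))"
    and cB1: "continuous_on {0..1} (\<lambda>t. VS VB S (K t))" and cB2: "continuous_on {0..1} (\<lambda>t. VS VB S (C - K t))"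
    using good faA faB by (auto simp: S_good_def)
  have split: "\<And>V t. finite_measure V \<Longrightarrow> sets V = sets borel \<Longrightarrow> t \<in> {0..1} \<Longrightarrow>
      measure V (K t) + measure V (C - K t) = measure V C"
    using Kb KC cake by (simp add: finite_measure.finite_measure_Diff)
  have ex: "\<exists>t\<in>{0..1}. VS V S (K t) = VS V S (C - K t)"
    if c1: "continuous_on {0..1} (\<lambda>t. VS V S (K t))" and c2: "continuous_on {0..1} (\<lambda>t. VS V S (C - K t))"
      and h0: "VS V S C0 \<le> VS V S (C - C0)" and h1: "VS V S C1 \<ge> VS V S (C - C1)" for V
  proof -
    have c: "continuous_on {0..1} (\<lambda>t. VS V S (K t) - VS V S (C - K t))"
      using c1 c2 by (intro continuous_on_diff)
    have "\<exists>x. 0 \<le> x \<and> x \<le> 1 \<and> VS V S (K x) - VS V S (C - K x) = 0"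
      by (rule IVT'[OF _ _ _ c]) (use h0 h1 K0 K1 in auto)
    then show ?thesis by auto
  qed
  have P1: "\<exists>t\<in>{0..1}. VS VA S (K t) = VS VA S (C - K t)" by (rule ex[OF cA1 cA2 hA0 hA1])
  have P2: "\<exists>t\<in>{0..1}. VS VB S (K t) = VS VB S (C - K t)" by (rule ex[OF cB1 cB2 hB0 hB1])
  have P3: "VS VA S (K t) \<ge> VS VA S (C - K t)
             \<and> VS VB S (C - K t) \<ge> VS VB S (K t)
             \<and> ereal (VS VA S (K t)) \<ge>
                 max (ereal (VS VA S C0)) (max (ereal (VS VA S (C - C1))) (inverse (knife_Loss C K S)))
             \<and> ereal (VS VB S (C - K t)) \<ge>
                 max (ereal (VS VB S C0)) (max (ereal (VS VB S (C - C1))) (inverse (knife_Loss C K S)))"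
    if tA: "tA \<in> {0..1}" and tB: "tB \<in> {0..1}" and eA: "VS VA S (K tA) = VS VA S (C - K tA)"
      and eB: "VS VB S (K tB) = VS VB S (C - K tB)" and t: "t \<in> {tA..tB}" for tA tB t
  proof -
    have t01: "t \<in> {0..1}" using t tA tB by auto
    have envA: "VS VA S (K t) \<ge> VS VA S (C - K t)"
    proof -
      have "VS VA S (C - K t) \<le> VS VA S (C - K tA)" using Kcm[OF tA t01] t by (intro VS_mono[OF fA]) auto
      also have "\<dots> = VS VA S (K tA)" using eA by simp
      also have "\<dots> \<le> VS VA S (K t)" using Km[OF tA t01] t by (intro VS_mono[OF fA]) auto
      finally show ?thesis .
    qed
    have envB: "VS VB S (C - K t) \<ge> VS VB S (K t)"
    proof -
      have "VS VB S (K t) \<le> VS VB S (K tB)" using Km[OF t01 tB] t by (intro VS_mono[OF fB]) auto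
      also have "\<dots> = VS VB S (C - K tB)" using eB by simp
      also have "\<dots> \<le> VS VB S (C - K t)" using Kcm[OF t01 tB] t by (intro VS_mono[OF fB]) auto
      finally show ?thesis .
    qed
    have A0: "VS VA S C0 \<le> VS VA S (K t)" using Km[of 0 t] t01 K0 by (intro VS_mono[OF fA]) auto
    have A1: "VS VA S (C - C1) \<le> VS VA S (K t)"
      using Kcm[of t 1] t01 K1 envA by (smt (verit) VS_mono[OF fA] atLeastAtMost_iff)
    have B0: "VS VB S C0 \<le> VS VB S (C - K t)"
      using Km[of 0 t] t01 K0 envB by (smt (verit) VS_mono[OF fB] atLeastAtMost_iff)
    have B1: "VS VB S (C - C1) \<le> VS VB S (C - K t)"
      using Kcm[of t 1] t01 K1 by (intro VS_mono[OF fB]) auto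
    have key: "1 \<le> l * VS VA S (K t) \<and> 1 \<le> l * VS VB S (C - K t)"
      if L: "knife_Loss C K S = ereal l" for l
    proof -
      have F1: "Loss (K s) S + Loss (C - K s) S \<le> ereal l" if s: "s \<in> {0..1}" for s
      proof -
        have "Loss (K s) S + Loss (C - K s) S \<le> knife_Loss C K S"
          unfolding knife_Loss_def by (rule SUP_upper) (rule s)
        then show ?thesis using L by simp
      qed
      have F3: "Loss (K s) S \<noteq> \<infinity> \<and> Loss (C - K s) S \<noteq> \<infinity>" if s: "s \<in> {0..1}" for s
        using F1[OF s] by auto
      have Fin: "\<exists>r. Loss X S = ereal r \<and> 1 \<le> r" if "NP S X" "X \<in> sets borel" "Loss X S \<noteq> \<infinity>" for X
        using ereal_fin1[OF that(3) Loss_ge1[OF that(1,2) pieces]] .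
      have F4: "\<exists>l1 l2. Loss (K s) S = ereal l1 \<and> Loss (C - K s) S = ereal l2 \<and> l1 + l2 \<le> l \<and> 1 \<le> l1 \<and> 1 \<le> l2"
        if s: "s \<in> {0..1}" and n1: "NP S (K s)" and n2: "NP S (C - K s)" for s
      proof -
        obtain l1 where l1: "Loss (K s) S = ereal l1" "1 \<le> l1" using Fin[OF n1 Kb[OF s]] F3[OF s] by blast
        obtain l2 where l2: "Loss (C - K s) S = ereal l2" "1 \<le> l2" using Fin[OF n2 Kcb[OF s]] F3[OF s] by blast
        have "l1 + l2 \<le> l" using F1[OF s] l1 l2 by simp
        then show ?thesis using l1 l2 by blast
      qed
      have F2: "\<exists>s\<in>{0..1}. NP S (K s) \<and> NP S (C - K s)"
      proof (rule ccontr)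
        assume no: "\<not> ?thesis"
        have "Loss (K s) S + Loss (C - K s) S = -\<infinity>" if s: "s \<in> {0..1}" for s
        proof (cases "NP S (K s)")
          case True
          then have "\<not> NP S (C - K s)" using no s by blast
          then have "Loss (C - K s) S = -\<infinity>" by (rule Loss_notNP)
          then show ?thesis using F3[OF s] by (cases "Loss (K s) S") auto
        next
          case False
          then have "Loss (K s) S = -\<infinity>" by (rule Loss_notNP)
          then show ?thesis using F3[OF s] by (cases "Loss (C - K s) S") auto
        qed
        then have "knife_Loss C K S \<le> -\<infinity>" unfolding knife_Loss_def by (intro SUP_least) auto
        then show False using L by simp
      qed
      then obtain ss where ss: "ss \<in> {0..1}" "NP S (K ss)" "NP S (C - K ss)" by blast
      have lpos: "0 < l" using F4[OF ss] by auto
      have both: "NP S (K t) \<and> NP S (C - K t)"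
      proof (rule ccontr)
        assume "\<not> ?thesis"
        then consider (b) "\<not> NP S (C - K t)" | (c) "\<not> NP S (K t)" by blast
        then show False
        proof cases
          case b
          have sst: "ss < t"
          proof (rule ccontr)
            assume "\<not> ss < t"
            then have "C - K ss \<subseteq> C - K t" using Kcm[OF t01 ss(1)] by simp
            then show False using NP_mono[OF ss(3)] b by blast
          qed
          have N1: "NP S (K tB)" using NP_mono[OF ss(2) Km[OF ss(1) tB]] sst t by auto
          have N2: "\<not> NP S (C - K tB)" using NP_mono[of S "C - K tB" "C - K t"] Kcm[OF t01 tB] t b by auto
          have z: "VS VB S (K tB) = 0" using eB notNP_VS[OF N2 faB] by simp
          obtain l' where l': "Loss (K tB) S = ereal l'" using Fin[OF N1 Kb[OF tB]] F3[OF tB] by blast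
          have "measure VB (K tB) \<le> l' * VS VB S (K tB)"
            unfolding VB_def by (rule LB[OF pieces Kb[OF tB] dB N1 l'])
          then have "measure VB (K tB) \<le> 0" using z by simp
          then have m1: "1 \<le> measure VB (C - K tB)" using split[OF fB sB tB] normB by simp
          define g where "g = (\<lambda>s. VS VB S (C - K s))"
          have kk: "1 \<le> l * g s" if s: "s \<in> {ss..t}" and n: "NP S (C - K s)" for s
          proof -
            have s01: "s \<in> {0..1}" using s ss(1) t01 by auto
            have n1: "NP S (K s)" using NP_mono[OF ss(2) Km[OF ss(1) s01]] s by auto
            obtain l1 l2 where ll: "Loss (K s) S = ereal l1" "Loss (C - K s) S = ereal l2" "l1 + l2 \<le> l" "1 \<le> l1" "1 \<le> l2"
              using F4[OF s01 n1 n] by blast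
            have "measure VB (C - K s) \<le> l2 * g s"
              unfolding VB_def g_def by (rule LB[OF pieces Kcb[OF s01] dB n ll(2)])
            moreover have "measure VB (C - K tB) \<le> measure VB (C - K s)"
              using Kcm[OF s01 tB] s t sB Kcb[OF s01] by (intro finite_measure.finite_measure_mono[OF fB]) auto
            moreover have "0 \<le> g s" unfolding g_def by (rule VS_nonneg[OF fB])
            moreover have "l2 * g s \<le> l * g s" using ll \<open>0 \<le> g s\<close> by (intro mult_right_mono) auto
            ultimately show ?thesis using m1 by linarith
          qed
          show False
          proof (rule ivt_gap[of ss t g l])
            show "continuous_on {ss..t} g" unfolding g_def
              by (rule continuous_on_subset[OF cB2]) (use ss(1) t01 in auto)
            show "ss \<le> t" using sst by simp
            show "0 < l" by (rule lpos)
            show "g s = 0 \<or> 1 \<le> l * g s" if "s \<in> {ss..t}" for s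
            proof (cases "NP S (C - K s)")
              case True then show ?thesis using kk[OF that] by simp
            next
              case False then show ?thesis unfolding g_def using notNP_VS[OF False faB] by simp
            qed
            show "(g ss = 0 \<and> 1 \<le> l * g t) \<or> (1 \<le> l * g ss \<and> g t = 0)"
              using kk[OF _ ss(3)] sst notNP_VS[OF b faB] by (auto simp: g_def)
          qed
        next
          case c
          have sst: "t < ss"
          proof (rule ccontr)
            assume "\<not> t < ss"
            then have "K ss \<subseteq> K t" using Km[OF ss(1) t01] by simp
            then show False using NP_mono[OF ss(2)] c by blast
          qed
          have N1: "NP S (C - K tA)" using NP_mono[OF ss(3) Kcm[OF tA ss(1)]] sst t by auto
          have N2: "\<not> NP S (K tA)" using NP_mono[of S "K tA" "K t"] Km[OF tA t01] t c by auto
          have z: "VS VA S (C - K tA) = 0" using eA notNP_VS[OF N2 faA] by simp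
          obtain l' where l': "Loss (C - K tA) S = ereal l'" using Fin[OF N1 Kcb[OF tA]] F3[OF tA] by blast
          have "measure VA (C - K tA) \<le> l' * VS VA S (C - K tA)"
            unfolding VA_def by (rule LB[OF pieces Kcb[OF tA] dA N1 l'])
          then have "measure VA (C - K tA) \<le> 0" using z by simp
          then have m1: "1 \<le> measure VA (K tA)" using split[OF fA sA tA] normA by simp
          define g where "g = (\<lambda>s. VS VA S (K s))"
          have kk: "1 \<le> l * g s" if s: "s \<in> {t..ss}" and n: "NP S (K s)" for s
          proof -
            have s01: "s \<in> {0..1}" using s ss(1) t01 by auto
            have n1: "NP S (C - K s)" using NP_mono[OF ss(3) Kcm[OF s01 ss(1)]] s by auto
            obtain l1 l2 where ll: "Loss (K s) S = ereal l1" "Loss (C - K s) S = ereal l2" "l1 + l2 \<le> l" "1 \<le> l1" "1 \<le> l2"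
              using F4[OF s01 n n1] by blast
            have "measure VA (K s) \<le> l1 * g s"
              unfolding VA_def g_def by (rule LB[OF pieces Kb[OF s01] dA n ll(1)])
            moreover have "measure VA (K tA) \<le> measure VA (K s)"
              using Km[OF tA s01] s t sA Kb[OF s01] by (intro finite_measure.finite_measure_mono[OF fA]) auto
            moreover have "0 \<le> g s" unfolding g_def by (rule VS_nonneg[OF fA])
            moreover have "l1 * g s \<le> l * g s" using ll \<open>0 \<le> g s\<close> by (intro mult_right_mono) auto
            ultimately show ?thesis using m1 by linarith
          qed
          show False
          proof (rule ivt_gap[of t ss g l])
            show "continuous_on {t..ss} g" unfolding g_def
              by (rule continuous_on_subset[OF cA1]) (use ss(1) t01 in auto)
            show "t \<le> ss" using sst by simp
            show "0 < l" by (rule lpos)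
            show "g s = 0 \<or> 1 \<le> l * g s" if "s \<in> {t..ss}" for s
            proof (cases "NP S (K s)")
              case True then show ?thesis using kk[OF that] by simp
            next
              case False then show ?thesis unfolding g_def using notNP_VS[OF False faA] by simp
            qed
            show "(g t = 0 \<and> 1 \<le> l * g ss) \<or> (1 \<le> l * g t \<and> g ss = 0)"
              using kk[OF _ ss(2)] sst notNP_VS[OF c faA] by (auto simp: g_def)
          qed
        qed
      qed
      obtain l1 l2 where ll: "Loss (K t) S = ereal l1" "Loss (C - K t) S = ereal l2" "l1 + l2 \<le> l" "1 \<le> l1" "1 \<le> l2"
        using F4[OF t01 both[THEN conjunct1] both[THEN conjunct2]] by blast
      have a1: "measure VA (K t) \<le> l1 * VS VA S (K t)"
        unfolding VA_def by (rule LB[OF pieces Kb[OF t01] dA both[THEN conjunct1] ll(1)])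
      have a2: "measure VA (C - K t) \<le> l2 * VS VA S (C - K t)"
        unfolding VA_def by (rule LB[OF pieces Kcb[OF t01] dA both[THEN conjunct2] ll(2)])
      have b1: "measure VB (K t) \<le> l1 * VS VB S (K t)"
        unfolding VB_def by (rule LB[OF pieces Kb[OF t01] dB both[THEN conjunct1] ll(1)])
      have b2: "measure VB (C - K t) \<le> l2 * VS VB S (C - K t)"
        unfolding VB_def by (rule LB[OF pieces Kcb[OF t01] dB both[THEN conjunct2] ll(2)])
      have sa: "measure VA (K t) + measure VA (C - K t) = 1" using split[OF fA sA t01] normA by simp
      have sb: "measure VB (K t) + measure VB (C - K t) = 1" using split[OF fB sB t01] normB by simp
      have nA: "0 \<le> VS VA S (K t)" by (rule VS_nonneg[OF fA])
      have nB: "0 \<le> VS VB S (C - K t)" by (rule VS_nonneg[OF fB])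
      have "l2 * VS VA S (C - K t) \<le> l2 * VS VA S (K t)" using envA ll by (intro mult_left_mono) auto
      moreover have "(l1 + l2) * VS VA S (K t) \<le> l * VS VA S (K t)" using ll nA by (intro mult_right_mono) auto
      ultimately have kA: "1 \<le> l * VS VA S (K t)" using a1 a2 sa by (simp add: distrib_right)
      have "l1 * VS VB S (K t) \<le> l1 * VS VB S (C - K t)" using envB ll by (intro mult_left_mono) auto
      moreover have "(l1 + l2) * VS VB S (C - K t) \<le> l * VS VB S (C - K t)" using ll nB by (intro mult_right_mono) auto
      ultimately have kB: "1 \<le> l * VS VB S (C - K t)" using b1 b2 sb by (simp add: distrib_right)
      show ?thesis using kA kB by simp
    qed
    have IA: "inverse (knife_Loss C K S) \<le> ereal (VS VA S (K t))"
      by (rule inv_bound[OF VS_nonneg[OF fA]]) (use key in blast)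
    have IB: "inverse (knife_Loss C K S) \<le> ereal (VS VB S (C - K t))"
      by (rule inv_bound[OF VS_nonneg[OF fB]]) (use key in blast)
    show ?thesis using envA envB A0 A1 B0 B1 IA IB by simp
  qed
  show ?thesis using P1 P2 P3 by blast
qed
end
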